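(* Let $\Omega\subset\mathbb{R}^n$ ($n\ge2$) be open bounded, $\alpha\in[0,n)$, and let $\mathcal{F},\mathcal{G}\in L^1(\Omega;\mathbb{R}^+)$ satisfy $\fint_\Omega\mathcal{G}\,dx\le C_*\fint_\Omega\mathcal{F}\,dx$ for a constant $C_*>0$. Assume that there are $\kappa,\lambda>0$ and a point $z_0\in\Omega$ with $\mathbf{M}_\alpha\mathcal{F}(z_0)\le\kappa\lambda$. Then there is a constant $C>0$ (depending only on $n$, $\alpha$ and $C_*$) such that for every $\sigma>0$, $$d^\alpha_{\mathcal{G}}(\Omega;\sigma\lambda)\le C\Big(\frac\kappa\sigma\Big)^{\frac n{n-\alpha}}\mathrm{diam}(\Omega)^n.$$
   Context: Functions on $\Omega$ are extended by zero outside $\Omega$. $\mathbf{M}_\alpha f(x)=\sup_{\rho>0}\rho^\alpha\fint_{B_\rho(x)}|f|$ with $B_\rho(x)$ the open ball. $d^\alpha_{\mathcal{G}}(E;\lambda)=\mathcal{L}^n(\{x\in E:\mathbf{M}_\alpha\mathcal{G}(x)>\lambda\})$. *)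

theory Defs
  imports "HOL-Analysis.Analysis"
begin

definition frac_max :: "real \<Rightarrow> ('a::euclidean_space) set \<Rightarrow> ('a \<Rightarrow> real) \<Rightarrow> 'a \<Rightarrow> ennreal" where
  "frac_max \<alpha> \<Omega> f x =
     (SUP \<rho>\<in>{0<..}. ennreal (\<rho> powr \<alpha> / measure lebesgue (ball x \<rho>)) *
        (\<integral>\<^sup>+ y. ennreal (\<bar>f y\<bar> * indicator \<Omega> y) * indicator (ball x \<rho>) y \<partial>lebesgue))"

definition distr_fm :: "real \<Rightarrow> ('a::euclidean_space) set \<Rightarrow> ('a \<Rightarrow> real) \<Rightarrow> 'a set \<Rightarrow> real \<Rightarrow> ennreal" where
  "distr_fm \<alpha> \<Omega> G E lam = emeasure lebesgue {x \<in> E. frac_max \<alpha> \<Omega> G x > ennreal lam}"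

end

theory Submission
  imports Defs
begin

lemma ball_emeas:
  fixes c :: "real^'n"
  assumes "r \<ge> 0"
  shows "emeasure lebesgue (ball c r) = ennreal (unit_ball_vol (real CARD('n)) * r ^ CARD('n))"
  using emeasure_ball[OF assms, of c] by (simp add: emeasure_completion)

lemma ball_meas:
  fixes c :: "real^'n"
  assumes "r \<ge> 0"
  shows "measure lebesgue (ball c r) = unit_ball_vol (real CARD('n)) * r ^ CARD('n)"
  using ball_emeas[OF assms, of c] assms by (simp add: measure_def)

lemma emeasure_UN_countable_le:
  assumes sets[measurable]: "\<And>i. i \<in> I \<Longrightarrow> X i \<in> sets M" and I[simp]: "countable I"
  shows "emeasure M (\<Union>(X ` I)) \<le> (\<integral>\<^sup>+i. emeasure M (X i) \<partial>count_space I)"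
proof -
  have eq: "\<And>x. indicator (\<Union>(X ` I)) x \<le> (\<integral>\<^sup>+ i. indicator (X i) x \<partial>count_space I)"
  proof cases
    fix x assume x: "x \<in> \<Union>(X ` I)"
    then obtain j where j: "x \<in> X j" "j \<in> I"
      by auto
    have "(\<integral>\<^sup>+ i. indicator {j} i \<partial>count_space I) \<le> (\<integral>\<^sup>+ i. indicator (X i) x \<partial>count_space I)"
      using j by (intro nn_integral_mono) (auto split: split_indicator)
    moreover have "(\<integral>\<^sup>+ i. indicator {j} i \<partial>count_space I) = (1::ennreal)"
      using j by (simp add: nn_integral_count_space_indicator)
    ultimately show "?thesis x" using x by simp
  qed (auto)
  note sets.countable_UN'[unfolded subset_eq, measurable]
  have "emeasure M (\<Union>(X ` I)) = (\<integral>\<^sup>+x. indicator (\<Union>(X ` I)) x \<partial>M)"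
    by simp
  also have "\<dots> \<le> (\<integral>\<^sup>+x. \<integral>\<^sup>+ i. indicator (X i) x \<partial>count_space I \<partial>M)"
    by (intro nn_integral_mono eq)
  also have "\<dots> = (\<integral>\<^sup>+i. \<integral>\<^sup>+x. indicator (X i) x \<partial>M \<partial>count_space I)"
    by (simp add: nn_integral_count_space_nn_integral)
  finally show ?thesis
    by (simp cong: nn_integral_cong_simp)
qed

lemma weak_type:
  fixes h :: "real^'n \<Rightarrow> ennreal" and S :: "(real^'n) set"
  assumes hm: "h \<in> borel_measurable lebesgue"
    and hA: "(\<integral>\<^sup>+y. h y \<partial>lebesgue) \<le> ennreal A0" and A0: "A0 > 0"
    and t: "t > 0" and al: "0 \<le> \<alpha>" "\<alpha> < real CARD('n)"
  shows "emeasure lebesgue {x\<in>S. (SUP \<rho>\<in>{0<..}. ennreal (\<rho> powr \<alpha> / measure lebesgue (ball x \<rho>)) * (\<integral>\<^sup>+ y. h y * indicator (ball x \<rho>) y \<partial>lebesgue)) > ennreal t}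
     \<le> ennreal (5^CARD('n) * unit_ball_vol (real CARD('n)) * (A0/(t*unit_ball_vol (real CARD('n)))) powr (real CARD('n) / (real CARD('n) - \<alpha>)))"
proof -
  define \<omega> where "\<omega> = unit_ball_vol (real CARD('n))"
  define N where "N = real CARD('n)"
  have N\<alpha>: "N - \<alpha> > 0" using al N_def by simp
  define \<mu> where "\<mu> = density lebesgue h"
  have \<mu>B: "emeasure \<mu> (ball x r) = (\<integral>\<^sup>+ y. h y * indicator (ball x r) y \<partial>lebesgue)" for x r
    unfolding \<mu>_def using hm by (simp add: emeasure_density)
  have sets\<mu>: "sets \<mu> = sets lebesgue" unfolding \<mu>_def by simp
  have \<mu>U: "emeasure \<mu> A \<le> ennreal A0" for A
  proof -
    have "emeasure \<mu> A \<le> emeasure \<mu> (space \<mu>)" by (rule emeasure_space)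
    also have "\<dots> = (\<integral>\<^sup>+ y. h y \<partial>lebesgue)"
      unfolding \<mu>_def using hm by (simp add: emeasure_density)
    finally show ?thesis using hA by simp
  qed
  have \<omega>: "\<omega> > 0" unfolding \<omega>_def by simp
  define R where "R = (A0/(t*\<omega>)) powr (1/(N-\<alpha>))"
  have R: "R > 0" unfolding R_def using A0 t \<omega> by simp
  define E where "E = {x\<in>S. (SUP \<rho>\<in>{0<..}. ennreal (\<rho> powr \<alpha> / measure lebesgue (ball x \<rho>)) * (\<integral>\<^sup>+ y. h y * indicator (ball x \<rho>) y \<partial>lebesgue)) > ennreal t}"
  have key: "\<exists>\<rho>>0. \<rho> \<le> R \<and> ennreal (measure lebesgue (ball x \<rho>)) \<le> ennreal (R powr \<alpha> / t) * emeasure \<mu> (ball x \<rho>)" if "x \<in> E" for x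
  proof -
    from that obtain \<rho> where \<rho>: "\<rho> > 0" and gt: "ennreal t < ennreal (\<rho> powr \<alpha> / measure lebesgue (ball x \<rho>)) * emeasure \<mu> (ball x \<rho>)"
      unfolding E_def by (auto simp: less_SUP_iff \<mu>B)
    have mB: "measure lebesgue (ball x \<rho>) = \<omega> * \<rho> powr N"
      using \<rho> ball_meas[of \<rho> x] unfolding \<omega>_def N_def by (simp add: powr_realpow)
    define c where "c = \<rho> powr \<alpha> / (\<omega> * \<rho> powr N)"
    have c: "c > 0" unfolding c_def using \<rho> \<omega> by simp
    have lt: "ennreal (t / c) < emeasure \<mu> (ball x \<rho>)"
    proof (rule ccontr)
      assume "\<not> ?thesis"
      then have "emeasure \<mu> (ball x \<rho>) \<le> ennreal (t/c)" by simp
      then have "ennreal c * emeasure \<mu> (ball x \<rho>) \<le> ennreal c * ennreal (t/c)" by (rule mult_left_mono) simp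
      also have "\<dots> = ennreal t" using c t by (simp add: ennreal_mult[symmetric])
      finally show False using gt mB c_def by simp
    qed
    have tc: "t / c = t * \<omega> * \<rho> powr (N - \<alpha>)"
      unfolding c_def using \<rho> \<omega> by (simp add: powr_diff field_simps)
    have "ennreal (t / c) < ennreal A0" using lt \<mu>U[of "ball x \<rho>"] by simp
    then have "t / c < A0" using c t by (subst (asm) ennreal_less_iff) auto
    then have "\<rho> powr (N-\<alpha>) < A0 / (t*\<omega>)" using tc t \<omega> by (simp add: field_simps)
    then have "(\<rho> powr (N-\<alpha>)) powr (1/(N-\<alpha>)) < R"
      unfolding R_def using N\<alpha> by (intro powr_less_mono2) auto
    then have \<rho>R: "\<rho> < R" using N\<alpha> \<rho> by (simp add: powr_powr)
    have "measure lebesgue (ball x \<rho>) = \<omega> * \<rho> powr \<alpha> * \<rho> powr (N-\<alpha>)"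
      using mB by (simp add: powr_diff \<rho>)
    also have "\<dots> \<le> \<omega> * R powr \<alpha> * \<rho> powr (N-\<alpha>)"
      using \<omega> \<rho>R \<rho> al by (intro mult_right_mono mult_left_mono powr_mono2) auto
    also have "\<dots> = (R powr \<alpha> / t) * (t / c)" using tc t by simp
    finally have "ennreal (measure lebesgue (ball x \<rho>)) \<le> ennreal (R powr \<alpha> / t) * ennreal (t / c)"
      using c t by (simp add: ennreal_mult[symmetric])
    also have "\<dots> \<le> ennreal (R powr \<alpha> / t) * emeasure \<mu> (ball x \<rho>)"
      using lt by (intro mult_left_mono) auto
    finally show ?thesis using \<rho> \<rho>R by auto
  qed
  obtain r where r: "\<And>x. x \<in> E \<Longrightarrow> r x > 0 \<and> r x \<le> R \<and> ennreal (measure lebesgue (ball x (r x))) \<le> ennreal (R powr \<alpha> / t) * emeasure \<mu> (ball x (r x))"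
    using key by metis
  have cov: "E \<subseteq> (\<Union>i\<in>E. ball i (r i))" using r by fastforce
  obtain C where C: "countable C" "C \<subseteq> E"
     and pw: "pairwise (\<lambda>i j. disjnt (ball i (r i)) (ball j (r j))) C"
     and cov5: "E \<subseteq> (\<Union>i\<in>C. ball i (5 * r i))"
    using Vitali_covering_lemma_balls[where S=E and K=E and a="\<lambda>x. x" and r=r and B=R, OF cov] r by blast
  have "emeasure lebesgue E \<le> emeasure lebesgue (\<Union>i\<in>C. ball i (5 * r i))"
    using C cov5 by (intro emeasure_mono sets.countable_UN') auto
  also have "\<dots> \<le> (\<integral>\<^sup>+i. emeasure lebesgue (ball i (5 * r i)) \<partial>count_space C)"
    using C by (intro emeasure_UN_countable_le) auto
  also have "\<dots> = (\<integral>\<^sup>+i. ennreal (5^CARD('n)) * ennreal (measure lebesgue (ball i (r i))) \<partial>count_space C)"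
  proof (intro nn_integral_cong)
    fix i assume "i \<in> space (count_space C)"
    then have "r i > 0" using C r by auto
    then show "emeasure lebesgue (ball i (5 * r i)) = ennreal (5^CARD('n)) * ennreal (measure lebesgue (ball i (r i)))"
    proof -
      assume ri: "r i > 0"
      have e1: "emeasure lebesgue (ball i (5 * r i)) = ennreal (unit_ball_vol (real CARD('n)) * (5 * r i) ^ CARD('n))"
        by (rule ball_emeas) (use ri in simp)
      have m1: "measure lebesgue (ball i (r i)) = unit_ball_vol (real CARD('n)) * (r i) ^ CARD('n)"
        by (rule ball_meas) (use ri in simp)
      show ?thesis unfolding e1 m1 using ri
        by (simp add: ennreal_mult[symmetric] power_mult_distrib mult_ac)
    qed
  qed
  also have "\<dots> \<le> (\<integral>\<^sup>+i. ennreal (5^CARD('n)) * (ennreal (R powr \<alpha> / t) * emeasure \<mu> (ball i (r i))) \<partial>count_space C)"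
    using C r by (intro nn_integral_mono mult_left_mono) auto
  also have "\<dots> = ennreal (5^CARD('n)) * ennreal (R powr \<alpha> / t) * (\<integral>\<^sup>+i. emeasure \<mu> (ball i (r i)) \<partial>count_space C)"
    by (simp add: nn_integral_cmult mult.assoc)
  also have "(\<integral>\<^sup>+i. emeasure \<mu> (ball i (r i)) \<partial>count_space C) = emeasure \<mu> (\<Union>i\<in>C. ball i (r i))"
  proof (rule emeasure_UN_countable[symmetric])
    show "disjoint_family_on (\<lambda>i. ball i (r i)) C"
      using pw by (auto simp: pairwise_def disjnt_def disjoint_family_on_def)
  qed (use C sets\<mu> in auto)
  also have "ennreal (5^CARD('n)) * ennreal (R powr \<alpha> / t) * emeasure \<mu> (\<Union>i\<in>C. ball i (r i))
      \<le> ennreal (5^CARD('n)) * ennreal (R powr \<alpha> / t) * ennreal A0"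
    by (intro mult_left_mono \<mu>U) auto
  also have "\<dots> = ennreal (5^CARD('n) * (R powr \<alpha> / t) * A0)"
    using R t A0 by (simp add: ennreal_mult[symmetric])
  also have "5^CARD('n) * (R powr \<alpha> / t) * A0 = 5^CARD('n) * \<omega> * (A0/(t*\<omega>)) powr (N / (N - \<alpha>))"
  proof -
    define Q where "Q = A0/(t*\<omega>)"
    have Q: "Q > 0" unfolding Q_def using A0 t \<omega> by simp
    have "R powr \<alpha> = Q powr (\<alpha>/(N-\<alpha>))" unfolding R_def Q_def by (simp add: powr_powr)
    moreover have "A0 / t = \<omega> * Q" unfolding Q_def using t \<omega> by simp
    moreover have "Q powr (\<alpha>/(N-\<alpha>)) * Q = Q powr (N/(N-\<alpha>))"
    proof -
      have "Q powr (\<alpha>/(N-\<alpha>)) * Q = Q powr (\<alpha>/(N-\<alpha>) + 1)" using Q by (simp add: powr_add)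
      also have "\<alpha>/(N-\<alpha>) + 1 = N/(N-\<alpha>)" using N\<alpha> by (simp add: field_simps)
      finally show ?thesis .
    qed
    ultimately show ?thesis unfolding Q_def
      by (metis (no_types, lifting) mult.assoc mult.commute times_divide_eq_right)
  qed
  finally show ?thesis unfolding E_def \<omega>_def N_def .
qed


lemma near_z0:
  fixes \<Omega> :: "(real^'n) set"
  assumes op: "open \<Omega>" and bd: "bounded \<Omega>" and z0: "z0 \<in> \<Omega>" and y: "y \<in> \<Omega>"
  shows "\<exists>e>0. dist z0 y + e \<le> diameter \<Omega>"
proof -
  obtain e where e: "e > 0" "ball y e \<subseteq> \<Omega>" using op y open_contains_ball by blast
  obtain u :: "real^'n" and k where u: "norm u = 1" "k \<ge> 0" "y - z0 = k *\<^sub>R u"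
  proof (cases "y = z0")
    case True
    obtain b :: "real^'n" where "b \<in> Basis" using nonempty_Basis by blast
    then have "norm b = 1" by simp
    then show ?thesis using that[of b 0] True by simp
  next
    case False
    then have "norm (y - z0) > 0" by simp
    then show ?thesis using that[of "(1/norm (y - z0)) *\<^sub>R (y - z0)" "norm (y - z0)"] by simp
  qed
  define w where "w = y + (e/2) *\<^sub>R u"
  have "dist y w = e/2" unfolding w_def dist_norm using u e by simp
  then have "w \<in> \<Omega>" using e by auto
  then have "dist z0 w \<le> diameter \<Omega>" using diameter_bounded_bound[OF bd z0] by blast
  moreover have "w - z0 = (k + e/2) *\<^sub>R u" unfolding w_def using u by (simp add: algebra_simps)
  then have "dist z0 w = k + e/2" using u e by (simp add: dist_norm norm_minus_commute)
  moreover have "dist z0 y = k" using u by (simp add: dist_norm norm_minus_commute)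
  ultimately show ?thesis using e by (intro exI[of _ "e/2"]) auto
qed

theorem mainTheorem5:
  fixes \<alpha> Cstar :: real
  assumes n2: "CARD('n::finite) \<ge> 2"
    and \<alpha>: "0 \<le> \<alpha>" "\<alpha> < real CARD('n)"
    and Cstar: "Cstar > 0"
  shows "\<exists>C>0. \<forall>(\<Omega>::(real^'n) set) F G \<kappa> lam z0.
     open \<Omega> \<longrightarrow> bounded \<Omega> \<longrightarrow>
     set_integrable lebesgue \<Omega> F \<longrightarrow> set_integrable lebesgue \<Omega> G \<longrightarrow>
     (\<forall>x\<in>\<Omega>. F x \<ge> 0) \<longrightarrow> (\<forall>x\<in>\<Omega>. G x \<ge> 0) \<longrightarrow>
     (set_lebesgue_integral lebesgue \<Omega> G) / measure lebesgue \<Omega>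
        \<le> Cstar * ((set_lebesgue_integral lebesgue \<Omega> F) / measure lebesgue \<Omega>) \<longrightarrow>
     \<kappa> > 0 \<longrightarrow> lam > 0 \<longrightarrow> z0 \<in> \<Omega> \<longrightarrow>
     frac_max \<alpha> \<Omega> F z0 \<le> ennreal (\<kappa> * lam) \<longrightarrow>
     (\<forall>\<sigma>>0. distr_fm \<alpha> \<Omega> G \<Omega> (\<sigma> * lam)
        \<le> ennreal (C * (\<kappa> / \<sigma>) powr (real CARD('n) / (real CARD('n) - \<alpha>)) * diameter \<Omega> ^ CARD('n)))"
proof -
  define N where "N = real CARD('n)"
  define \<omega> where "\<omega> = unit_ball_vol N"
  define p where "p = N/(N-\<alpha>)"
  have \<omega>: "\<omega> > 0" unfolding \<omega>_def N_def by simp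
  have N\<alpha>: "N - \<alpha> > 0" using \<alpha> N_def by simp
  show ?thesis
  proof (intro exI[of _ "5^CARD('n) * \<omega> * Cstar powr p"] conjI allI impI)
    show "5^CARD('n) * \<omega> * Cstar powr p > 0" using \<omega> Cstar by simp
  next
    fix \<Omega> :: "(real^'n) set" and F G :: "real^'n \<Rightarrow> real" and \<kappa> lam :: real and z0 and \<sigma> :: real
    assume op: "open \<Omega>" and bd: "bounded \<Omega>" and iF: "set_integrable lebesgue \<Omega> F"
      and iG: "set_integrable lebesgue \<Omega> G" and F0: "\<forall>x\<in>\<Omega>. F x \<ge> 0" and G0: "\<forall>x\<in>\<Omega>. G x \<ge> 0"
      and avg: "(set_lebesgue_integral lebesgue \<Omega> G) / measure lebesgue \<Omega>
        \<le> Cstar * ((set_lebesgue_integral lebesgue \<Omega> F) / measure lebesgue \<Omega>)"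
      and \<kappa>: "\<kappa> > 0" and lam: "lam > 0" and z0: "z0 \<in> \<Omega>"
      and fm: "frac_max \<alpha> \<Omega> F z0 \<le> ennreal (\<kappa> * lam)" and \<sigma>: "\<sigma> > 0"
    define d where "d = diameter \<Omega>"
    have sub: "\<Omega> \<subseteq> ball z0 d"
    proof
      fix y assume "y \<in> \<Omega>"
      then obtain e where "e > 0" "dist z0 y + e \<le> d" using near_z0[OF op bd z0] d_def by blast
      then show "y \<in> ball z0 d" by simp
    qed
    have d: "d > 0" using sub z0 by (auto simp: dist_commute)
    define IF where "IF = set_lebesgue_integral lebesgue \<Omega> F"
    define IG where "IG = set_lebesgue_integral lebesgue \<Omega> G"
    have eqF: "(\<lambda>y. \<bar>F y\<bar> * indicator \<Omega> y) = (\<lambda>y. \<bar>indicator \<Omega> y *\<^sub>R F y\<bar>)"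
      by (auto simp: fun_eq_iff split: split_indicator)
    have eqG: "(\<lambda>y. \<bar>G y\<bar> * indicator \<Omega> y) = (\<lambda>y. \<bar>indicator \<Omega> y *\<^sub>R G y\<bar>)"
      by (auto simp: fun_eq_iff split: split_indicator)
    have intF: "integrable lebesgue (\<lambda>y. \<bar>F y\<bar> * indicator \<Omega> y)"
      unfolding eqF using iF unfolding set_integrable_def by (rule integrable_abs)
    have intG: "integrable lebesgue (\<lambda>y. \<bar>G y\<bar> * indicator \<Omega> y)"
      unfolding eqG using iG unfolding set_integrable_def by (rule integrable_abs)
    have IFeq: "IF = integral\<^sup>L lebesgue (\<lambda>y. \<bar>F y\<bar> * indicator \<Omega> y)"
      unfolding IF_def set_lebesgue_integral_def
      by (intro Bochner_Integration.integral_cong) (auto split: split_indicator simp: F0)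
    have IGeq: "IG = integral\<^sup>L lebesgue (\<lambda>y. \<bar>G y\<bar> * indicator \<Omega> y)"
      unfolding IG_def set_lebesgue_integral_def
      by (intro Bochner_Integration.integral_cong) (auto split: split_indicator simp: G0)
    have nnF: "(\<integral>\<^sup>+y. ennreal (\<bar>F y\<bar> * indicator \<Omega> y) \<partial>lebesgue) = ennreal IF"
      unfolding IFeq by (rule nn_integral_eq_integral[OF intF]) auto
    have nnG: "(\<integral>\<^sup>+y. ennreal (\<bar>G y\<bar> * indicator \<Omega> y) \<partial>lebesgue) = ennreal IG"
      unfolding IGeq by (rule nn_integral_eq_integral[OF intG]) auto
    have IF0: "IF \<ge> 0" unfolding IFeq by (intro integral_nonneg_AE) auto
    have mG: "(\<lambda>y. ennreal (\<bar>G y\<bar> * indicator \<Omega> y)) \<in> borel_measurable lebesgue"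
      using borel_measurable_integrable[OF intG] by measurable
    have mball: "measure lebesgue (ball z0 d) = \<omega> * d powr N"
      using ball_meas[of d z0] d unfolding \<omega>_def N_def by (simp add: powr_realpow)
    have "ennreal (d powr \<alpha> / measure lebesgue (ball z0 d)) *
        (\<integral>\<^sup>+ y. ennreal (\<bar>F y\<bar> * indicator \<Omega> y) * indicator (ball z0 d) y \<partial>lebesgue) \<le> frac_max \<alpha> \<Omega> F z0"
      unfolding frac_max_def using d by (intro SUP_upper) auto
    also have "(\<integral>\<^sup>+ y. ennreal (\<bar>F y\<bar> * indicator \<Omega> y) * indicator (ball z0 d) y \<partial>lebesgue)
        = (\<integral>\<^sup>+y. ennreal (\<bar>F y\<bar> * indicator \<Omega> y) \<partial>lebesgue)"
      using sub by (intro nn_integral_cong) (auto split: split_indicator)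
    finally have X: "ennreal (d powr \<alpha> / (\<omega> * d powr N)) * ennreal IF \<le> frac_max \<alpha> \<Omega> F z0"
      using nnF mball by simp
    have c0: "0 \<le> d powr \<alpha> / (\<omega> * d powr N)" using \<omega> by simp
    have "ennreal (d powr \<alpha> / (\<omega> * d powr N) * IF) \<le> ennreal (\<kappa> * lam)"
      using order_trans[OF X fm] ennreal_mult[OF c0 IF0] by simp
    then have "d powr \<alpha> / (\<omega> * d powr N) * IF \<le> \<kappa> * lam"
      using \<kappa> lam by (subst (asm) ennreal_le_iff) auto
    then have IFb: "IF \<le> \<kappa> * lam * \<omega> * d powr (N - \<alpha>)"
      using d \<omega> by (simp add: powr_diff field_simps)
    obtain e where e: "e > 0" "ball z0 e \<subseteq> \<Omega>" using op z0 open_contains_ball by blast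
    have "measure lebesgue (ball z0 e) \<le> measure lebesgue \<Omega>"
      using e lmeasurable_open[OF bd op] by (intro measure_mono_fmeasurable) auto
    moreover have "measure lebesgue (ball z0 e) > 0"
      using ball_meas[of e z0] e by simp
    ultimately have m\<Omega>: "measure lebesgue \<Omega> > 0" by linarith
    have "IG \<le> Cstar * IF" using avg m\<Omega> unfolding IF_def IG_def by (simp add: field_simps)
    also have "\<dots> \<le> Cstar * (\<kappa> * lam * \<omega> * d powr (N - \<alpha>))"
      using IFb Cstar by simp
    finally have IGb: "IG \<le> Cstar * \<kappa> * lam * \<omega> * d powr (N - \<alpha>)" by (simp add: mult_ac)
    define A0 where "A0 = Cstar * \<kappa> * lam * \<omega> * d powr (N - \<alpha>)"
    have A0: "A0 > 0" unfolding A0_def using Cstar \<kappa> lam \<omega> d by simp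
    have hA: "(\<integral>\<^sup>+y. ennreal (\<bar>G y\<bar> * indicator \<Omega> y) \<partial>lebesgue) \<le> ennreal A0"
      unfolding nnG A0_def using IGb by (intro ennreal_leI)
    have "distr_fm \<alpha> \<Omega> G \<Omega> (\<sigma> * lam) \<le> ennreal (5^CARD('n) * \<omega> * (A0/((\<sigma> * lam)*\<omega>)) powr p)"
      unfolding distr_fm_def frac_max_def \<omega>_def p_def N_def
      using weak_type[OF mG hA A0 _ \<alpha>, of "\<sigma> * lam" \<Omega>] \<sigma> lam by simp
    also have "5^CARD('n) * \<omega> * (A0/((\<sigma> * lam)*\<omega>)) powr p
       = 5^CARD('n) * \<omega> * Cstar powr p * (\<kappa> / \<sigma>) powr p * d ^ CARD('n)"
    proof -
      have "A0/((\<sigma> * lam)*\<omega>) = Cstar * (\<kappa>/\<sigma>) * d powr (N - \<alpha>)"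
        unfolding A0_def using \<sigma> lam \<omega> by (simp add: field_simps)
      moreover have "(Cstar * (\<kappa>/\<sigma>) * d powr (N - \<alpha>)) powr p = (Cstar * (\<kappa>/\<sigma>)) powr p * (d powr (N - \<alpha>)) powr p"
        by (rule powr_mult) (use Cstar \<kappa> \<sigma> d in auto)?
      moreover have "(Cstar * (\<kappa>/\<sigma>)) powr p = Cstar powr p * (\<kappa>/\<sigma>) powr p"
        by (rule powr_mult) (use Cstar \<kappa> \<sigma> d in auto)?
      ultimately have "(A0/((\<sigma> * lam)*\<omega>)) powr p = Cstar powr p * (\<kappa>/\<sigma>) powr p * (d powr (N - \<alpha>)) powr p"
        by simp
      also have "(d powr (N - \<alpha>)) powr p = d ^ CARD('n)"
        using N\<alpha> d unfolding p_def by (simp add: powr_powr N_def powr_realpow)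
      finally show ?thesis by (simp add: mult_ac)
    qed
    finally show "distr_fm \<alpha> \<Omega> G \<Omega> (\<sigma> * lam)
        \<le> ennreal (5^CARD('n) * \<omega> * Cstar powr p * (\<kappa> / \<sigma>) powr (real CARD('n) / (real CARD('n) - \<alpha>)) * diameter \<Omega> ^ CARD('n))"
      unfolding d_def p_def N_def .
  qed
qed

end
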